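(* Let $\mathbb{P}\subset\mathbb{R}^n$ be a polyhedron, $\mathbb{G}$ a nonempty face of $\mathbb{P}$, and $\mathfrak q\in(\mathbb{G}^* )^\circ|\mathbb{P}$. Then there is $r>0$ (depending on $\mathfrak q$) such that for all $\mathfrak n\in\mathbb{P}\setminus\mathbb{G}$ and $\mathfrak m\in\mathbb{G}$ one has $\mathrm{P}_{V(\mathbb{G})^\perp}(\mathfrak n-\mathfrak m)\ne0$ and $$\Big\langle\mathfrak q,\frac{\mathrm{P}_{V(\mathbb{G})^\perp}(\mathfrak n-\mathfrak m)}{|\mathrm{P}_{V(\mathbb{G})^\perp}(\mathfrak n-\mathfrak m)|}\Big\rangle\ge r.$$
   Context: A polyhedron is a finite intersection of closed half-spaces. For a polyhedron $\mathbb{Q}$ and a nonempty $\mathbb{G}\subset\mathbb{Q}$, $\mathbb{G}$ is a face of $\mathbb{Q}$ if there are $\mathfrak q,r$ with $\langle\mathfrak q,u\rangle=r$ on $\mathbb{G}$ and $>r$ on $\mathbb{Q}\setminus\mathbb{G}$; $(\mathbb{G}^* )^\circ|\mathbb{Q}=\{\mathfrak q\in\mathbb{R}^n\setminus\{0\}:\exists r,\langle\mathfrak q,u\rangle=r\ (u\in\mathbb{G}),\langle\mathfrak q,y\rangle>r\ (y\in\mathbb{Q}\setminus\mathbb{G})\}$. $V(\mathbb{G})=\mathrm{span}(\mathbb{G}-\mathfrak p)$ for any $\mathfrak p\in\mathbb{G}$ (the direction space of the affine hull), and $\mathrm{P}_{W}$ denotes orthogonal projection onto a subspace $W$. *)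

theory Defs
  imports "HOL-Analysis.Analysis"
begin

definition is_face :: "'a::euclidean_space set \<Rightarrow> 'a set \<Rightarrow> bool" where
  "is_face G Q \<longleftrightarrow> G \<noteq> {} \<and> G \<subseteq> Q \<and>
     (\<exists>q r. (\<forall>u\<in>G. inner q u = r) \<and> (\<forall>y\<in>Q - G. inner q y > r))"

definition dual_open :: "'a::euclidean_space set \<Rightarrow> 'a set \<Rightarrow> 'a set" where
  "dual_open G Q = {q. q \<noteq> 0 \<and>
     (\<exists>r. (\<forall>u\<in>G. inner q u = r) \<and> (\<forall>y\<in>Q - G. inner q y > r))}"

text \<open>Direction space of the affine hull: V(G) = span (G - p) for p in G.\<close>
definition dir_space :: "'a::euclidean_space set \<Rightarrow> 'a set" where
  "dir_space G = span ((\<lambda>u. u - (SOME p. p \<in> G)) ` G)"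

definition orth_proj :: "'a::euclidean_space set \<Rightarrow> 'a \<Rightarrow> 'a" where
  "orth_proj W x = closest_point W x"

end

theory Submission
  imports Defs
begin

lemma proj_facts:
  fixes V :: "'a::euclidean_space set"
  assumes "subspace V"
  shows "closest_point (orthogonal_comp V) x \<in> orthogonal_comp V"
    and "x - closest_point (orthogonal_comp V) x \<in> V"
proof -
  let ?W = "orthogonal_comp V"
  let ?c = "closest_point ?W x"
  have sW: "subspace ?W" by (rule subspace_orthogonal_comp)
  have cW: "closed ?W" using sW closed_subspace by blast
  have cvW: "convex ?W" using sW subspace_imp_convex by blast
  have neW: "?W \<noteq> {}" using sW subspace_0 by blast
  show c: "?c \<in> ?W" using closest_point_in_set[OF cW neW] .
  have "z \<bullet> (x - ?c) = 0" if z: "z \<in> ?W" for z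
  proof -
    have "?c + z \<in> ?W" using sW c z subspace_add by blast
    from closest_point_dot[OF cvW cW this, of x]
    have 1: "(x - ?c) \<bullet> z \<le> 0" by simp
    have "?c - z \<in> ?W" using sW c z subspace_diff by blast
    from closest_point_dot[OF cvW cW this, of x]
    have 2: "(x - ?c) \<bullet> z \<ge> 0" by (simp add: inner_diff_right)
    from 1 2 show ?thesis by (simp add: inner_commute)
  qed
  then have "x - ?c \<in> orthogonal_comp ?W"
    by (auto simp: orthogonal_comp_def orthogonal_def)
  then show "x - ?c \<in> V" using orthogonal_comp_self[OF assms] by simp
qed

theorem mainTheorem15:
  fixes P G :: "'a::euclidean_space set" and q :: 'a
  assumes "polyhedron P"
    and "is_face G P"
    and "q \<in> dual_open G P"
  shows "\<exists>r>0. \<forall>n\<in>P - G. \<forall>m\<in>G.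
           orth_proj (orthogonal_comp (dir_space G)) (n - m) \<noteq> 0 \<and>
           inner q (orth_proj (orthogonal_comp (dir_space G)) (n - m)
                    /\<^sub>R norm (orth_proj (orthogonal_comp (dir_space G)) (n - m))) \<ge> r"
proof -
  from assms(2) have Gne: "G \<noteq> {}" and GP: "G \<subseteq> P" by (auto simp: is_face_def)
  from assms(3) obtain r0 where qG: "\<forall>u\<in>G. q \<bullet> u = r0" and qP: "\<forall>y\<in>P - G. q \<bullet> y > r0"
    by (auto simp: dual_open_def)
  from assms(1) obtain F where F: "finite F" "P = \<Inter>F" "\<forall>h\<in>F. \<exists>a b. a \<noteq> 0 \<and> h = {x. a \<bullet> x \<le> b}"
    by (auto simp: polyhedron_def)
  from F(3) obtain a b where ab: "\<And>h. h \<in> F \<Longrightarrow> h = {x. a h \<bullet> x \<le> b h}" by metis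
  have Pdef: "x \<in> P \<longleftrightarrow> (\<forall>h\<in>F. a h \<bullet> x \<le> b h)" for x
    using F(2) ab by auto
  have Geq: "G = P \<inter> {x. q \<bullet> x = r0}" using GP qG qP by force
  have convG: "convex G" unfolding Geq
    using polyhedron_imp_convex[OF assms(1)] convex_hyperplane convex_Int by blast
  define p where "p = (SOME p. p \<in> G)"
  have pG: "p \<in> G" unfolding p_def using Gne by (meson ex_in_conv someI_ex)
  define V where "V = dir_space G"
  have Vdef: "V = span ((\<lambda>u. u - p) ` G)" unfolding V_def dir_space_def p_def ..
  have sV: "subspace V" unfolding Vdef by (rule subspace_span)
  have GV: "u - p \<in> V" if "u \<in> G" for u unfolding Vdef using that by (intro span_base) auto
  have qV: "q \<bullet> v = 0" if "v \<in> V" for v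
    using that unfolding Vdef
  proof (induction rule: span_induct)
    case base show ?case using subspace_hyperplane[of q] by simp
  next
    case (step x) then obtain u where "u \<in> G" "x = u - p" by auto
    then show ?case using qG pG by (simp add: inner_diff_right)
  qed
  obtain m0 where m0: "m0 \<in> rel_interior G" using rel_interior_eq_empty[OF convG] Gne by blast
  then obtain e where m0G: "m0 \<in> G" and e: "e > 0" and eb: "ball m0 e \<inter> affine hull G \<subseteq> G"
    by (auto simp: mem_rel_interior_ball)
  define S where "S = {h\<in>F. a h \<bullet> m0 = b h}"
  have SG: "a h \<bullet> u = b h" if h: "h \<in> S" and u: "u \<in> G" for h u
  proof (rule ccontr)
    assume ne: "a h \<bullet> u \<noteq> b h"
    have "a h \<bullet> u \<le> b h" using u GP h Pdef unfolding S_def by auto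
    with ne have lt: "a h \<bullet> u < b h" by simp
    define t where "t = e / (2 * (norm (m0 - u) + 1))"
    have t0: "t > 0" unfolding t_def using e by (intro divide_pos_pos) (auto intro: add_nonneg_pos)
    define z where "z = (1 + t) *\<^sub>R m0 + (- t) *\<^sub>R u"
    have "dist m0 z = t * norm (m0 - u)"
      by (simp add: z_def dist_norm algebra_simps flip: scaleR_right_diff_distrib) (use t0 in \<open>simp add: norm_minus_commute\<close>)
    also have "\<dots> < e"
    proof -
      have "t * norm (m0 - u) = e * (norm (m0 - u) / (2 * (norm (m0 - u) + 1)))"
        by (simp add: t_def)
      also have "\<dots> < e * 1"
        proof (intro mult_strict_left_mono e)
        have "0 \<le> norm (m0 - u)" by simp
        then show "norm (m0 - u) / (2 * (norm (m0 - u) + 1)) < 1" by (subst divide_less_eq) argo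
      qed
      finally show ?thesis by simp
    qed
    finally have zb: "z \<in> ball m0 e" by simp
    have "z \<in> affine hull G" unfolding z_def
      by (rule mem_affine[OF affine_affine_hull]) (use m0G u in \<open>auto intro: hull_inc\<close>)
    with zb eb have "z \<in> G" by blast
    then have "a h \<bullet> z \<le> b h" using GP h Pdef unfolding S_def by auto
    moreover have "a h \<bullet> z = (1 + t) * b h - t * (a h \<bullet> u)"
      using h unfolding S_def z_def by (simp add: inner_add_right inner_diff_right)
    moreover have "t * (a h \<bullet> u) < t * b h" using t0 lt by simp
    ultimately show False by (simp add: algebra_simps)
  qed
  have SV: "a h \<bullet> v = 0" if h: "h \<in> S" and v: "v \<in> V" for h v
    using v unfolding Vdef
  proof (induction rule: span_induct)
    case base show ?case using subspace_hyperplane[of "a h"] by simp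
  next
    case (step x) then obtain u where "u \<in> G" "x = u - p" by auto
    then show ?case using SG[OF h] pG by (simp add: inner_diff_right)
  qed
  define W where "W = orthogonal_comp V"
  define K where "K = {d. \<forall>h\<in>S. a h \<bullet> d \<le> 0}"
  have clK: "closed K"
  proof -
    have "K = (\<Inter>h\<in>S. {d. a h \<bullet> d \<le> 0})" by (auto simp: K_def)
    then show ?thesis by (simp add: closed_INT closed_halfspace_le)
  qed
  have sW: "subspace W" unfolding W_def by (rule subspace_orthogonal_comp)
  have clW: "closed W" using sW closed_subspace by blast
  have key: "q \<bullet> d > 0" if dK: "d \<in> K" and dW: "d \<in> W" and dn: "norm d = 1" for d
  proof -
    have "\<forall>h\<in>F - S. \<forall>\<^sub>F \<epsilon> in at_right (0::real). \<epsilon> * (a h \<bullet> d) < b h - a h \<bullet> m0"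
    proof
      fix h assume h: "h \<in> F - S"
      then have "a h \<bullet> m0 \<le> b h" using m0G GP Pdef by auto
      with h have pos: "b h - a h \<bullet> m0 > 0" unfolding S_def by auto
      have "((\<lambda>\<epsilon>. \<epsilon> * (a h \<bullet> d)) \<longlongrightarrow> 0 * (a h \<bullet> d)) (at_right (0::real))"
        by (intro tendsto_intros)
      then have "((\<lambda>\<epsilon>. \<epsilon> * (a h \<bullet> d)) \<longlongrightarrow> 0) (at_right (0::real))" by simp
      from order_tendstoD(2)[OF this pos] show "\<forall>\<^sub>F \<epsilon> in at_right (0::real). \<epsilon> * (a h \<bullet> d) < b h - a h \<bullet> m0" .
    qed
    then have "\<forall>\<^sub>F \<epsilon> in at_right (0::real). \<forall>h\<in>F - S. \<epsilon> * (a h \<bullet> d) < b h - a h \<bullet> m0"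
      using F(1) by (simp add: eventually_ball_finite)
    moreover have "\<forall>\<^sub>F \<epsilon> in at_right (0::real). 0 < \<epsilon>" by (rule eventually_at_right_less)
    ultimately have "\<forall>\<^sub>F \<epsilon> in at_right (0::real). 0 < \<epsilon> \<and> (\<forall>h\<in>F - S. \<epsilon> * (a h \<bullet> d) < b h - a h \<bullet> m0)"
      by (rule eventually_conj[rotated])
    then obtain \<epsilon> :: real where eps: "0 < \<epsilon>" "\<forall>h\<in>F - S. \<epsilon> * (a h \<bullet> d) < b h - a h \<bullet> m0"
      using eventually_happens'[of "at_right (0::real)"] trivial_limit_at_right_real by blast
    define z where "z = m0 + \<epsilon> *\<^sub>R d"
    have zP: "z \<in> P" unfolding Pdef
    proof
      fix h assume h: "h \<in> F"
      show "a h \<bullet> z \<le> b h"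
      proof (cases "h \<in> S")
        case True
        then have "a h \<bullet> d \<le> 0" using dK K_def by auto
        then have "\<epsilon> * (a h \<bullet> d) \<le> 0" using eps(1) by (simp add: mult_nonneg_nonpos)
        then show ?thesis using True unfolding S_def z_def by (simp add: inner_add_right)
      next
        case False
        then show ?thesis using eps(2) h unfolding z_def by (force simp: inner_add_right)
      qed
    qed
    have qm0: "q \<bullet> m0 = r0" using qG m0G by auto
    have qz: "q \<bullet> z = r0 + \<epsilon> * (q \<bullet> d)" unfolding z_def using qm0 by (simp add: inner_add_right)
    have "q \<bullet> z \<ge> r0" using zP qP qG by (cases "z \<in> G") force+
    then have ge: "q \<bullet> d \<ge> 0" using qz eps(1) by (simp add: zero_le_mult_iff)
    show ?thesis
    proof (rule ccontr)
      assume "\<not> q \<bullet> d > 0"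
      with ge have q0: "q \<bullet> d = 0" by simp
      then have "z \<in> G" using Geq zP qz by simp
      then have "(z - p) - (m0 - p) \<in> V" using GV m0G sV subspace_diff by blast
      then have "\<epsilon> *\<^sub>R d \<in> V" by (simp add: z_def)
      then have "(1/\<epsilon>) *\<^sub>R (\<epsilon> *\<^sub>R d) \<in> V" using sV subspace_scale by blast
      then have "d \<in> V" using eps(1) by simp
      with dW have "d \<in> V \<inter> W" by simp
      then have "d = 0" using orthogonal_Int_0[OF sV] unfolding W_def by blast
      with dn show False by simp
    qed
  qed
  obtain c where c0: "c > 0" and cK: "\<And>d. d \<in> K \<inter> W \<inter> sphere 0 1 \<Longrightarrow> q \<bullet> d \<ge> c"
  proof (cases "K \<inter> W \<inter> sphere 0 1 = {}")
    case True then show ?thesis using that[of 1] by auto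
  next
    case False
    have "compact (K \<inter> W \<inter> sphere 0 1)"
      using clK clW by (intro closed_Int_compact closed_Int compact_sphere) auto
    have "continuous_on (K \<inter> W \<inter> sphere 0 1) (\<lambda>d. q \<bullet> d)" by (intro continuous_intros)
    from continuous_attains_inf[OF \<open>compact _\<close> False this]
    obtain x0 where x0: "x0 \<in> K \<inter> W \<inter> sphere 0 1" "\<forall>y\<in>K \<inter> W \<inter> sphere 0 1. q \<bullet> x0 \<le> q \<bullet> y"
      by blast
    have "q \<bullet> x0 > 0" using key x0(1) by auto
    then show ?thesis using that[of "q \<bullet> x0"] x0(2) by auto
  qed
  show ?thesis
  proof (rule exI[of _ c], intro conjI[OF c0] ballI)
    fix n m assume n: "n \<in> P - G" and m: "m \<in> G"
    define y where "y = orth_proj (orthogonal_comp (dir_space G)) (n - m)"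
    have yW: "y \<in> W" and yV: "(n - m) - y \<in> V"
      using proj_facts[OF sV, of "n - m"] unfolding y_def orth_proj_def W_def V_def by auto
    have "q \<bullet> ((n - m) - y) = 0" using qV yV by blast
    then have qy: "q \<bullet> y = q \<bullet> (n - m)" by (simp add: inner_diff_right)
    have "q \<bullet> (n - m) > 0" using qP n qG m by (simp add: inner_diff_right)
    then have qy0: "q \<bullet> y > 0" using qy by simp
    then have y0: "y \<noteq> 0" by auto
    have yK: "a h \<bullet> y \<le> 0" if h: "h \<in> S" for h
    proof -
      have "a h \<bullet> ((n - m) - y) = 0" using SV[OF h yV] .
      then have "a h \<bullet> y = a h \<bullet> n - a h \<bullet> m" by (simp add: inner_diff_right)
      moreover have "a h \<bullet> m = b h" using SG[OF h m] .
      moreover have "a h \<bullet> n \<le> b h" using n h Pdef unfolding S_def by auto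
      ultimately show ?thesis by simp
    qed
    have ny: "norm y > 0" using y0 by simp
    have "y /\<^sub>R norm y \<in> K"
      unfolding K_def using yK ny by (auto intro!: mult_nonneg_nonpos)
    moreover have "y /\<^sub>R norm y \<in> W" using sW yW subspace_scale by blast
    moreover have "y /\<^sub>R norm y \<in> sphere 0 1" using ny by simp
    ultimately have "q \<bullet> (y /\<^sub>R norm y) \<ge> c" using cK by blast
    then show "orth_proj (orthogonal_comp (dir_space G)) (n - m) \<noteq> 0 \<and>
           inner q (orth_proj (orthogonal_comp (dir_space G)) (n - m)
                    /\<^sub>R norm (orth_proj (orthogonal_comp (dir_space G)) (n - m))) \<ge> c"
      using y0 unfolding y_def by simp
  qed
qed

end
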